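(* Let $\mathcal X$ be a real normed space and $\mathcal Y$ a normed space. Let $f:\mathcal X\to\mathcal Y$ be a mapping such that $\|f(x+y)-f(x-y)\|\le\varepsilon$ for some $\varepsilon>0$ and for all $x,y\in\mathcal X$ with $x\perp y$. Then there is an orthogonally constant mapping $c:\mathcal X\to\mathcal Y$ such that $\|f(x)-c(x)\|\le\varepsilon$ for all $x\in\mathcal X$.
   Context: For $x,y$ in a real normed space $\mathcal X$, isosceles orthogonality is defined by $x\perp y$ if and only if $\|x+y\|=\|x-y\|$. A mapping $c:\mathcal X\to\mathcal Y$ is called orthogonally constant if $c(x+y)=c(x-y)$ for all $x,y\in\mathcal X$ with $x\perp y$. *)

theory Defs
  imports "HOL-Analysis.Analysis"
begin

definition iso_orth :: "'a::real_normed_vector \<Rightarrow> 'a \<Rightarrow> bool" where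
  "iso_orth x y \<longleftrightarrow> norm (x + y) = norm (x - y)"

definition orth_constant :: "('a::real_normed_vector \<Rightarrow> 'b) \<Rightarrow> bool" where
  "orth_constant c \<longleftrightarrow> (\<forall>x y. iso_orth x y \<longrightarrow> c (x + y) = c (x - y))"

end

theory Submission
  imports Defs
begin

theorem proposition2p4:
  fixes f :: "'a::real_normed_vector \<Rightarrow> 'b::real_normed_vector"
    and \<epsilon> :: real
  assumes "\<epsilon> > 0"
    and "\<And>x y. iso_orth x y \<Longrightarrow> norm (f (x + y) - f (x - y)) \<le> \<epsilon>"
  shows "\<exists>c :: 'a \<Rightarrow> 'b. orth_constant c \<and> (\<forall>x. norm (f x - c x) \<le> \<epsilon>)"
proof -
  define c :: "'a \<Rightarrow> 'b" where "c x = f (SOME z. norm z = norm x)" for x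
  have oc: "orth_constant c"
    unfolding orth_constant_def iso_orth_def c_def by simp
  have "norm (f x - c x) \<le> \<epsilon>" for x
  proof -
    define z :: 'a where "z = (SOME z. norm z = norm x)"
    have nz: "norm z = norm x" proof -
      have "\<exists>w::'a. norm w = norm x" by blast
      from someI_ex[OF this] show ?thesis unfolding z_def .
    qed
    define u where "u = (1/2) *\<^sub>R (x + z)"
    define v where "v = (1/2) *\<^sub>R (x - z)"
    have "u + v = (1/2) *\<^sub>R x + (1/2) *\<^sub>R x" unfolding u_def v_def by (simp add: scaleR_add_right scaleR_diff_right)
    also have "\<dots> = x" by (simp flip: scaleR_add_left)
    finally have uv1: "u + v = x" .
    have "u - v = (1/2) *\<^sub>R z + (1/2) *\<^sub>R z" unfolding u_def v_def by (simp add: scaleR_add_right scaleR_diff_right)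
    also have "\<dots> = z" by (simp flip: scaleR_add_left)
    finally have uv2: "u - v = z" .
    have "iso_orth u v" unfolding iso_orth_def uv1 uv2 using nz by simp
    from assms(2)[OF this] show ?thesis unfolding uv1 uv2 c_def z_def[symmetric] .
  qed
  with oc show ?thesis by blast
qed

end
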